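(* Let $n\ge 2$, $m\in\{1,\dots,n-1\}$, $\sigma\in(0,1)$, and let $\Sigma$ be an $n\times n$ symmetric positive-definite matrix. Let $G_o=\mathcal{N}(0,\Sigma)$ and $G^{(1)}_{\mathrm{SSL}}=\mathcal{N}(0,\sigma\Sigma)$. For $\alpha>\beta>0$ satisfying $\alpha^m\beta^{n-m}=\sigma^n$, let $D=\mathrm{diag}(\alpha,\dots,\alpha,\beta,\dots,\beta)$ ($m$ entries $\alpha$, $n-m$ entries $\beta$) and $G_{\mathrm{SL}}=\mathcal{N}(0,\Sigma^{1/2}D\Sigma^{1/2})$. Then $$D_{\mathrm{KL}}(G_o\|G_{\mathrm{SL}})\ge D_{\mathrm{KL}}(G_o\|G^{(1)}_{\mathrm{SSL}}),$$ with equality iff $\alpha=\beta=\sigma$. Moreover, as $\beta\to 0$ with $\alpha$ determined by $\alpha^m\beta^{n-m}=\sigma^n$, $$\frac{D_{\mathrm{KL}}(G_o\|G_{\mathrm{SL}})}{D_{\mathrm{KL}}(G_o\|G^{(1)}_{\mathrm{SSL}})}\to\infty.$$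
   Context: $D_{\mathrm{KL}}$ denotes Kullback–Leibler divergence; $\Sigma^{1/2}$ is the symmetric positive-definite square root of $\Sigma$. The constraint $\alpha^m\beta^{n-m}=\sigma^n$ is equivalent to $\det(\Sigma^{1/2}D\Sigma^{1/2})=\det(\sigma\Sigma)$ (equal covariance-ellipsoid volume). *)

theory Defs
  imports "HOL-Analysis.Analysis" "HOL-Probability.Probability"
begin

text \<open>Symmetric positive-definite matrices over an index type 'n.\<close>
definition sym_posdef :: "real^'n^'n \<Rightarrow> bool" where
  "sym_posdef A \<longleftrightarrow> transpose A = A \<and> (\<forall>x. x \<noteq> 0 \<longrightarrow> x \<bullet> (A *v x) > 0)"

text \<open>The symmetric positive-definite square root.\<close>
definition mat_sqrt :: "real^'n^'n \<Rightarrow> real^'n^'n" where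
  "mat_sqrt A = (THE S. sym_posdef S \<and> S ** S = A)"

text \<open>Diagonal matrix with diagonal d.\<close>
definition diag_mat :: "(real^'n) \<Rightarrow> real^'n^'n" where
  "diag_mat d = (\<chi> i j. if i = j then d $ i else 0)"

text \<open>Density of the centred Gaussian N(0,S) on real^'n w.r.t. Lebesgue measure.\<close>
definition gauss_density :: "real^'n^'n \<Rightarrow> real^'n \<Rightarrow> real" where
  "gauss_density S x =
     exp (- (x \<bullet> (matrix_inv S *v x)) / 2) / sqrt ((2 * pi) ^ CARD('n) * det S)"

definition gaussian :: "real^'n^'n \<Rightarrow> (real^'n) measure" where
  "gaussian S = density lborel (\<lambda>x. ennreal (gauss_density S x))"

text \<open>D_KL(P || Q) (natural log): Isabelle's KL_divergence b M N integrates log(dN/dM) over N.\<close>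
definition KL :: "'a measure \<Rightarrow> 'a measure \<Rightarrow> real" where
  "KL P Q = KL_divergence (exp 1) Q P"

text \<open>The matrix D = diag(alpha,..,alpha,beta,..,beta): the first m indices (w.r.t. the
  linear order on the index type) carry alpha.\<close>
definition D_mat :: "nat \<Rightarrow> real \<Rightarrow> real \<Rightarrow> real^('n::{finite,linorder})^('n::{finite,linorder})" where
  "D_mat m \<alpha> \<beta> = diag_mat (\<chi> i. if card {j. j < i} < m then \<alpha> else \<beta>)"

end

theory Submission
  imports Defs
begin
typedef 'a wo = "UNIV :: 'a set" by auto
instance wo :: (finite) finite
proof
  have "(UNIV :: 'a wo set) = Abs_wo ` UNIV" by (metis Rep_wo_inverse surj_def)
  then show "finite (UNIV :: 'a wo set)" by (metis finite finite_imageI)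
qed
instantiation wo :: (linorder) linorder
begin
definition less_eq_wo :: "'a wo \<Rightarrow> 'a wo \<Rightarrow> bool" where "less_eq_wo x y \<longleftrightarrow> Rep_wo x \<le> Rep_wo y"
definition less_wo :: "'a wo \<Rightarrow> 'a wo \<Rightarrow> bool" where "less_wo x y \<longleftrightarrow> Rep_wo x < Rep_wo y"
instance proof
  fix x y z :: "'a wo"
  show "x < y \<longleftrightarrow> x \<le> y \<and> \<not> y \<le> x" by (auto simp: less_eq_wo_def less_wo_def)
  show "x \<le> x" by (simp add: less_eq_wo_def)
  show "x \<le> y \<Longrightarrow> y \<le> z \<Longrightarrow> x \<le> z" by (auto simp: less_eq_wo_def)
  show "x \<le> y \<Longrightarrow> y \<le> x \<Longrightarrow> x = y" by (auto simp: less_eq_wo_def Rep_wo_inject[symmetric])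
  show "x \<le> y \<or> y \<le> x" by (auto simp: less_eq_wo_def)
qed
end
lemma wo_less_induct_aux:
  fixes P :: "'a::{finite,linorder} wo \<Rightarrow> bool"
  assumes step: "\<And>x. (\<And>y. y < x \<Longrightarrow> P y) \<Longrightarrow> P x"
  shows "\<forall>x::'a wo. card {y. y < x} = k \<longrightarrow> P x"
proof (induction k rule: less_induct)
  case (less k)
  show ?case
  proof (intro allI impI)
    fix x :: "'a wo" assume k: "card {y. y < x} = k"
    show "P x"
    proof (rule step)
      fix y assume "y < x"
      have "{z. z < y} \<subset> {z. z < x}" using \<open>y < x\<close> by auto
      then have "card {z. z < y} < card {z. z < x}" by (intro psubset_card_mono) auto
      then show "P y" using less k by blast
    qed
  qed
qed
instance wo :: ("{finite,linorder}") wellorder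
  by standard (use wo_less_induct_aux in blast)

lemma lborel_orth_wo:
  fixes V :: "real^('m::{finite,wellorder})^('m::{finite,wellorder})"
  assumes V: "orthogonal_matrix V"
  shows "distr lborel borel ((*v) V) = lborel"
proof (rule lborel_eqI[symmetric])
  have VV: "transpose V ** V = mat 1" "V ** transpose V = mat 1"
    using V by (auto simp: orthogonal_matrix_def)
  have oT: "orthogonal_transformation ((*v) (transpose V))"
    using V by (simp add: orthogonal_transformation_matrix)
  fix l u :: "real^('m::{finite,wellorder})"
  assume le: "\<And>b. b \<in> Basis \<Longrightarrow> l \<bullet> b \<le> u \<bullet> b"
  have inv1: "transpose V *v (V *v x) = x" for x
    by (simp del: transpose_matrix_vector add: matrix_vector_mul_assoc VV)
  have inv2: "V *v (transpose V *v x) = x" for x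
    by (simp del: transpose_matrix_vector add: matrix_vector_mul_assoc VV)
  have pre: "(*v) V -` box l u = (*v) (transpose V) ` box l u"
  proof (rule set_eqI, rule iffI)
    fix x assume "x \<in> (*v) V -` box l u"
    then have "V *v x \<in> box l u" by simp
    then show "x \<in> (*v) (transpose V) ` box l u" by (rule image_eqI[where x="V *v x" and f="(*v) (transpose V)", OF inv1[of x, symmetric]])
  next
    fix x assume "x \<in> (*v) (transpose V) ` box l u"
    then obtain y where "y \<in> box l u" "x = transpose V *v y" by blast
    then show "x \<in> (*v) V -` box l u" by (simp del: transpose_matrix_vector add: inv2)
  qed
  have meas: "(*v) V \<in> borel_measurable borel"
    by (intro borel_measurable_continuous_onI linear_continuous_on) (simp add: linear_linear)
  have X: "(*v) V -` box l u \<in> sets borel"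
    using measurable_sets[OF meas, of "box l u"] by simp
  have Xl: "(*v) V -` box l u \<in> lmeasurable"
    unfolding pre by (rule measurable_orthogonal_image[OF oT]) simp
  have "emeasure (distr lborel borel ((*v) V)) (box l u) = emeasure lborel ((*v) V -` box l u)"
    using meas by (simp add: emeasure_distr)
  also have "\<dots> = emeasure lebesgue ((*v) V -` box l u)"
    using X by simp
  also have "\<dots> = measure lebesgue ((*v) V -` box l u)"
    using Xl by (simp add: emeasure_eq_measure2)
  also have "\<dots> = measure lebesgue (box l u)"
    unfolding pre using measure_orthogonal_image[OF oT, of "box l u"] by simp
  also have "\<dots> = measure lborel (box l u)" by simp
  also have "\<dots> = (\<Prod>b\<in>Basis. (u - l) \<bullet> b)"
    using le by (simp add: measure_lborel_box_eq)
  finally show "emeasure (distr lborel borel ((*v) V)) (box l u) = (\<Prod>b\<in>Basis. (u - l) \<bullet> b)"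
    using le by (simp add: prod_nonneg inner_diff_left)
qed simp

definition cart_tr :: "real^(('n::{finite,linorder}) wo) \<Rightarrow> real^('n::{finite,linorder})" where
  "cart_tr v = (\<chi> i. v $ Abs_wo i)"
definition cart_tr' :: "real^('n::{finite,linorder}) \<Rightarrow> real^(('n::{finite,linorder}) wo)" where
  "cart_tr' x = (\<chi> j. x $ Rep_wo j)"

lemma prod_Basis_cart: "(\<Prod>b\<in>(Basis :: (real^'n::finite) set). f b) = (\<Prod>i\<in>UNIV. f (axis i 1))"
proof -
  have B: "(Basis :: (real^'n) set) = range (\<lambda>i. axis i 1)"
    by (auto simp: Basis_vec_def)
  have "inj (\<lambda>i::'n. axis i (1::real))" by (auto simp: inj_def axis_eq_axis)
  then show ?thesis unfolding B by (simp add: prod.reindex)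
qed

lemma sum_Basis_cart: "(\<Sum>b\<in>(Basis :: (real^'n::finite) set). f b) = (\<Sum>i\<in>UNIV. f (axis i 1))"
proof -
  have B: "(Basis :: (real^'n) set) = range (\<lambda>i. axis i 1)"
    by (auto simp: Basis_vec_def)
  have "inj (\<lambda>i::'n. axis i (1::real))" by (auto simp: inj_def axis_eq_axis)
  then show ?thesis unfolding B by (simp add: sum.reindex)
qed

lemma prod_wo: "(\<Prod>j\<in>UNIV. f (Rep_wo j)) = (\<Prod>i\<in>UNIV. (f i :: real))"
proof -
  have inj: "inj Rep_wo" by (simp add: inj_def Rep_wo_inject)
  have r: "range Rep_wo = UNIV" by (rule surjI[where f=Abs_wo]) (simp add: Abs_wo_inverse)
  show ?thesis using prod.reindex[OF inj, of f] unfolding r by (simp add: o_def)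
qed

lemma sum_wo: "(\<Sum>j\<in>UNIV. f (Rep_wo j)) = (\<Sum>i\<in>UNIV. (f i :: real))"
proof -
  have inj: "inj Rep_wo" by (simp add: inj_def Rep_wo_inject)
  have r: "range Rep_wo = UNIV" by (rule surjI[where f=Abs_wo]) (simp add: Abs_wo_inverse)
  show ?thesis using sum.reindex[OF inj, of f] unfolding r by (simp add: o_def)
qed

lemma sum_wo': "(\<Sum>j\<in>UNIV. f (Abs_wo j)) = (\<Sum>i\<in>UNIV. (f i :: real))"
  using sum_wo[of "\<lambda>j. f (Abs_wo j)"] by (simp add: Rep_wo_inverse)

lemma linear_cart_tr: "linear cart_tr"
  unfolding linear_iff cart_tr_def by (simp add: vec_eq_iff)

lemma meas_cart_tr[measurable]: "cart_tr \<in> borel_measurable borel"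
  by (intro borel_measurable_continuous_onI linear_continuous_on) (simp add: linear_linear linear_cart_tr)

lemma meas_matvec[measurable]: "(*v) (A::real^('n::finite)^('m::finite)) \<in> borel_measurable borel"
  by (intro borel_measurable_continuous_onI linear_continuous_on) (simp add: linear_linear)

lemma lborel_cart_tr: "distr lborel borel cart_tr = (lborel :: (real^'n::{finite,linorder}) measure)"
proof (rule lborel_eqI[symmetric])
  fix l u :: "real^('n::{finite,linorder})"
  assume le: "\<And>b. b \<in> Basis \<Longrightarrow> l \<bullet> b \<le> u \<bullet> b"
  then have le': "l $ i \<le> u $ i" for i
    using le[of "axis i 1"] by (auto simp: Basis_vec_def inner_axis)
  have pre: "cart_tr -` box l u = box (cart_tr' l) (cart_tr' u)"
  proof -
    have "(\<forall>i. l $ i < v $ Abs_wo i \<and> v $ Abs_wo i < u $ i) \<longleftrightarrow>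
          (\<forall>j. l $ Rep_wo j < v $ j \<and> v $ j < u $ Rep_wo j)" for v :: "real^('n wo)"
      by (metis Abs_wo_inverse Rep_wo_inverse UNIV_I)
    then show ?thesis by (auto simp: mem_box_cart cart_tr_def cart_tr'_def)
  qed
  have c: "\<forall>b\<in>Basis. cart_tr' l \<bullet> b \<le> cart_tr' u \<bullet> b"
    using le' by (auto simp: Basis_vec_def inner_axis cart_tr'_def)
  have "emeasure (distr lborel borel cart_tr) (box l u) = emeasure lborel (box (cart_tr' l) (cart_tr' u))"
    by (simp add: emeasure_distr pre)
  also have "\<dots> = ennreal (\<Prod>b\<in>Basis. (cart_tr' u - cart_tr' l) \<bullet> b)"
    using c by (simp add: emeasure_lborel_box_eq)
  also have "\<dots> = ennreal (\<Prod>j\<in>UNIV. (u $ Rep_wo j - l $ Rep_wo j))"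
    by (simp add: prod_Basis_cart inner_axis cart_tr'_def)
  also have "\<dots> = ennreal (\<Prod>i\<in>UNIV. (u $ i - l $ i))"
    by (simp add: prod_wo[where f="\<lambda>i. u $ i - l $ i"])
  finally show "emeasure (distr lborel borel cart_tr) (box l u) = (\<Prod>b\<in>Basis. (u - l) \<bullet> b)"
    by (simp add: prod_Basis_cart inner_axis)
qed simp

lemma lborel_orth:
  fixes U :: "real^('n::{finite,linorder})^('n::{finite,linorder})"
  assumes U: "orthogonal_matrix U"
  shows "distr lborel borel ((*v) U) = lborel"
proof -
  define V :: "real^('n wo)^('n wo)" where "V = (\<chi> a b. U $ Rep_wo a $ Rep_wo b)"
  have UU: "transpose U ** U = mat 1" using U by (simp add: orthogonal_matrix)
  have "transpose V ** V = mat 1"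
  proof -
    have "(\<Sum>k\<in>UNIV. U $ Rep_wo k $ Rep_wo a * U $ Rep_wo k $ Rep_wo b) = (if a = b then 1 else 0)" for a b
    proof -
      have "(\<Sum>k\<in>UNIV. U $ Rep_wo k $ Rep_wo a * U $ Rep_wo k $ Rep_wo b)
          = (\<Sum>k\<in>UNIV. U $ k $ Rep_wo a * U $ k $ Rep_wo b)"
        by (rule sum_wo[where f="\<lambda>k. U $ k $ Rep_wo a * U $ k $ Rep_wo b"])
      also have "\<dots> = (transpose U ** U) $ Rep_wo a $ Rep_wo b"
        by (simp add: matrix_matrix_mult_def transpose_def)
      also have "\<dots> = (if a = b then 1 else 0)"
        by (simp add: UU mat_def Rep_wo_inject)
      finally show ?thesis .
    qed
    then show ?thesis
      by (simp add: vec_eq_iff matrix_matrix_mult_def transpose_def V_def mat_def)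
  qed
  then have V: "orthogonal_matrix V" by (simp add: orthogonal_matrix)
  have comm: "(*v) U \<circ> cart_tr = cart_tr \<circ> (*v) V"
  proof
    fix v :: "real^('n wo)"
    have "(\<Sum>k\<in>UNIV. U $ i $ k * v $ Abs_wo k) = (\<Sum>j\<in>UNIV. U $ i $ Rep_wo j * v $ j)" for i
      using sum_wo[where f="\<lambda>k. U $ i $ k * v $ Abs_wo k"] by (simp add: Rep_wo_inverse)
    then show "((*v) U \<circ> cart_tr) v = (cart_tr \<circ> (*v) V) v"
      by (simp add: vec_eq_iff cart_tr_def matrix_vector_mult_def V_def Abs_wo_inverse)
  qed
  have "distr lborel borel ((*v) U) = distr (distr lborel borel cart_tr) borel ((*v) U)"
    by (simp add: lborel_cart_tr)
  also have "\<dots> = distr lborel borel ((*v) U \<circ> cart_tr)"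
    by (simp add: distr_distr)
  also have "\<dots> = distr lborel borel (cart_tr \<circ> (*v) V)" by (simp add: comm)
  also have "\<dots> = distr (distr lborel borel ((*v) V)) borel cart_tr"
    by (simp add: distr_distr)
  also have "\<dots> = lborel" by (subst lborel_orth_wo[OF V]) (rule lborel_cart_tr)
  finally show ?thesis .
qed

lemma sym_inner:
  fixes A :: "real^'n^'n"
  assumes "transpose A = A"
  shows "x \<bullet> (A *v y) = (A *v x) \<bullet> y"
proof -
  have "A *v x = x v* A" using assms vector_transpose_matrix[of x A] by simp
  then show ?thesis by (simp add: dot_lmul_matrix)
qed

lemma quad_le_zero:
  fixes c K :: real
  assumes "\<And>t. 2 * t * c \<le> t\<^sup>2 * K"
  shows "c = 0"
proof (rule ccontr)
  assume c: "c \<noteq> 0"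
  define t where "t = c / (\<bar>K\<bar> + 1)"
  define s where "s = \<bar>K\<bar> + 1"
  have pos: "s > 0" by (simp add: s_def)
  have ts: "t * s = c" using pos by (simp add: t_def s_def)
  have "2 * t * c * s\<^sup>2 \<le> t\<^sup>2 * K * s\<^sup>2" using assms[of t] by (intro mult_right_mono) auto
  moreover have "2 * t * c * s\<^sup>2 = 2 * c * c * s"
  proof -
    have "2 * t * c * s\<^sup>2 = 2 * c * s * (t * s)" by (simp add: power2_eq_square mult_ac)
    also have "\<dots> = 2 * c * s * c" by (simp only: ts)
    finally show ?thesis by (simp add: ac_simps)
  qed
  moreover have "t\<^sup>2 * K * s\<^sup>2 = c * c * K"
  proof -
    have "t\<^sup>2 * K * s\<^sup>2 = (t * s) * (t * s) * K" by (simp add: power2_eq_square)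
    also have "\<dots> = c * c * K" by (simp only: ts)
    finally show ?thesis .
  qed
  ultimately have "2 * c * c * s \<le> c * c * K" by simp
  then have "2 * c * c * (\<bar>K\<bar> + 1) \<le> c * c * K" by (simp add: s_def)
  moreover have "c * c * K \<le> c * c * \<bar>K\<bar>" by (intro mult_left_mono) auto
  moreover have "c * c > 0" using c by (metis not_real_square_gt_zero)
  moreover have "2 * c * c * (\<bar>K\<bar> + 1) = 2 * (c * c * \<bar>K\<bar>) + 2 * (c * c)"
    by (simp add: algebra_simps)
  moreover have "c * c * \<bar>K\<bar> \<ge> 0" by simp
  ultimately show False by linarith
qed

lemma eig_exists:
  fixes A :: "real^'n^'n"
  assumes sym: "transpose A = A" and V: "subspace V" "V \<noteq> {0}"
    and inv: "\<forall>x\<in>V. A *v x \<in> V"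
  shows "\<exists>v\<in>V. norm v = 1 \<and> A *v v = (v \<bullet> (A *v v)) *\<^sub>R v"
proof -
  define K where "K = V \<inter> sphere 0 1"
  define f where "f x = x \<bullet> (A *v x)" for x
  have "compact K" unfolding K_def
    by (intro closed_Int_compact closed_subspace V compact_sphere)
  moreover have "K \<noteq> {}"
  proof -
    obtain x where x: "x \<in> V" "x \<noteq> 0" using V subspace_0 by blast
    then have "x /\<^sub>R norm x \<in> K" using V(1) by (simp add: K_def subspace_scale)
    then show ?thesis by blast
  qed
  moreover have "continuous_on K f" unfolding f_def
    by (intro continuous_intros linear_continuous_on) (simp add: linear_linear)
  ultimately obtain v where v: "v \<in> K" and vmax: "\<And>y. y \<in> K \<Longrightarrow> f y \<le> f v"
    using continuous_attains_sup[of K f] by blast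
  define l where "l = f v"
  have vV: "v \<in> V" and nv: "norm v = 1" using v by (auto simp: K_def)
  have vv: "v \<bullet> v = 1" using nv by (simp add: norm_eq_1)
  have key: "w \<bullet> (A *v v) = 0" if w: "w \<in> V" "w \<bullet> v = 0" for w
  proof (rule quad_le_zero)
    fix t :: real
    define u where "u = v + t *\<^sub>R w"
    have uu: "u \<bullet> u = 1 + t\<^sup>2 * (w \<bullet> w)"
      using w vv by (simp add: u_def inner_add_left inner_add_right inner_commute power2_eq_square)
    have upos: "u \<bullet> u > 0" unfolding uu by (simp add: add_pos_nonneg)
    have uV: "u \<in> V" using V(1) vV w by (simp add: u_def subspace_add subspace_scale)
    have "u /\<^sub>R norm u \<in> K"
      using uV upos V(1) by (auto simp: K_def subspace_scale)
    then have "f (u /\<^sub>R norm u) \<le> l" using vmax l_def by blast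
    moreover have "f (u /\<^sub>R norm u) = f u / (u \<bullet> u)"
      by (simp add: f_def matrix_vector_mult_scaleR power2_norm_eq_inner[symmetric] power2_eq_square
          inner_scaleR_left inner_scaleR_right) (simp add: field_simps)
    ultimately have "f u \<le> l * (u \<bullet> u)" using upos by (simp add: divide_le_eq)
    moreover have "f u = l + 2 * t * (w \<bullet> (A *v v)) + t\<^sup>2 * f w"
    proof -
      have "v \<bullet> (A *v w) = w \<bullet> (A *v v)"
        using sym_inner[OF sym, of v w] by (simp add: inner_commute)
      then show ?thesis
        by (simp add: u_def f_def l_def matrix_vector_right_distrib matrix_vector_mult_scaleR
            inner_add_left inner_add_right power2_eq_square algebra_simps)
    qed
    ultimately show "2 * t * (w \<bullet> (A *v v)) \<le> t\<^sup>2 * (l * (w \<bullet> w) - f w)"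
      unfolding uu by (simp add: algebra_simps)
  qed
  define w where "w = A *v v - l *\<^sub>R v"
  have wV: "w \<in> V" using V(1) inv vV by (simp add: w_def subspace_diff subspace_scale)
  have wv: "w \<bullet> v = 0"
    using vv by (simp add: w_def l_def f_def inner_diff_left inner_commute inner_diff_right)
  have "w \<bullet> w = w \<bullet> (A *v v) - l * (w \<bullet> v)"
    by (simp add: w_def inner_diff_right)
  also have "\<dots> = 0" using key[OF wV wv] wv by simp
  finally have "w = 0" by simp
  then have "A *v v = l *\<^sub>R v" by (simp add: w_def)
  then show ?thesis using vV nv by (auto simp: l_def f_def)
qed

lemma spectral_aux:
  fixes A :: "real^'n^'n"
  assumes sym: "transpose A = A"
  shows "subspace V \<Longrightarrow> (\<forall>x\<in>V. A *v x \<in> V) \<Longrightarrow> dim V = k \<Longrightarrow>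
    \<exists>B. finite B \<and> card B = k \<and> B \<subseteq> V \<and> (\<forall>x\<in>B. \<forall>y\<in>B. x \<noteq> y \<longrightarrow> x \<bullet> y = 0) \<and>
        (\<forall>b\<in>B. norm b = 1 \<and> A *v b = (b \<bullet> (A *v b)) *\<^sub>R b)"
proof (induction k arbitrary: V)
  case 0
  then show ?case by (intro exI[of _ "{}"]) auto
next
  case (Suc k)
  have "V \<noteq> {0}" using Suc.prems(3) by auto
  then obtain v where v: "v \<in> V" "norm v = 1" "A *v v = (v \<bullet> (A *v v)) *\<^sub>R v"
    using eig_exists[OF sym Suc.prems(1) _ Suc.prems(2)] by blast
  define l where "l = v \<bullet> (A *v v)"
  have v3: "A *v v = l *\<^sub>R v" unfolding l_def by (rule v(3))
  define W where "W = {y \<in> V. \<forall>x \<in> span {v}. orthogonal x y}"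
  have W_eq: "W = {y\<in>V. y \<bullet> v = 0}"
  proof (rule set_eqI, rule iffI)
    fix y assume "y \<in> W"
    then have "y \<in> V" "orthogonal v y" by (auto simp: W_def span_base)
    then show "y \<in> {y\<in>V. y \<bullet> v = 0}" by (simp add: orthogonal_def inner_commute)
  next
    fix y assume y: "y \<in> {y\<in>V. y \<bullet> v = 0}"
    have "orthogonal x y" if "x \<in> span {v}" for x
    proof -
      have "orthogonal y x"
        by (rule orthogonal_to_span[OF that]) (use y in \<open>auto simp: orthogonal_def\<close>)
      then show ?thesis by (simp add: orthogonal_commute)
    qed
    then show "y \<in> W" using y by (auto simp: W_def)
  qed
  have subW: "subspace W"
  proof -
    have "W = V \<inter> {y. \<forall>x \<in> span {v}. orthogonal x y}" by (auto simp: W_def)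
    then show ?thesis using Suc.prems(1) subspace_orthogonal_to_vectors subspace_inter by auto
  qed
  have spV: "span {v} \<subseteq> V" using v(1) Suc.prems(1) by (simp add: span_minimal)
  have "dim W + dim (span {v}) = dim V"
    unfolding W_def by (rule dim_subspace_orthogonal_to_vectors[OF subspace_span Suc.prems(1) spV])
  moreover have "dim (span {v}) = 1" using v(2) by auto
  ultimately have dimW: "dim W = k" using Suc.prems(3) by simp
  have invW: "\<forall>x\<in>W. A *v x \<in> W"
  proof
    fix x assume "x \<in> W"
    then have x: "x \<in> V" "x \<bullet> v = 0" by (auto simp: W_eq)
    have "(A *v x) \<bullet> v = x \<bullet> (A *v v)" using sym_inner[OF sym, of x v] by simp
    also have "\<dots> = 0" using x v3 by (simp add: inner_scaleR_right)
    finally show "A *v x \<in> W" using x Suc.prems(2) by (auto simp: W_eq)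
  qed
  obtain B where B: "finite B" "card B = k" "B \<subseteq> W" "\<forall>x\<in>B. \<forall>y\<in>B. x \<noteq> y \<longrightarrow> x \<bullet> y = 0"
      "\<forall>b\<in>B. norm b = 1 \<and> A *v b = (b \<bullet> (A *v b)) *\<^sub>R b"
    using Suc.IH[OF subW invW dimW] by blast
  have vv: "v \<bullet> v = 1" using v(2) by (simp add: norm_eq_1)
  have Bv: "b \<bullet> v = 0" if "b \<in> B" for b using B(3) that by (auto simp: W_eq)
  have vB: "v \<notin> B" using Bv vv by force
  show ?case
  proof (intro exI[of _ "insert v B"] conjI)
    show "finite (insert v B)" using B by simp
    show "card (insert v B) = Suc k" using B vB by simp
    show "insert v B \<subseteq> V" using B(3) v(1) by (auto simp: W_eq)
    show "\<forall>x\<in>insert v B. \<forall>y\<in>insert v B. x \<noteq> y \<longrightarrow> x \<bullet> y = 0"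
      using B(4) Bv by (auto simp: inner_commute)
    show "\<forall>b\<in>insert v B. norm b = 1 \<and> A *v b = (b \<bullet> (A *v b)) *\<^sub>R b"
      using B(5) v by auto
  qed
qed

lemma spectral:
  fixes A :: "real^'n^'n"
  assumes sym: "transpose A = A"
  obtains U d where "orthogonal_matrix U" "A = U ** diag_mat d ** transpose U"
    "\<And>j. norm (\<chi> i. U $ i $ j) = 1" "\<And>j. A *v (\<chi> i. U $ i $ j) = d $ j *\<^sub>R (\<chi> i. U $ i $ j)"
proof -
  have "dim (UNIV :: (real^'n) set) = CARD('n)" by simp
  then obtain B where B: "finite B" "card B = CARD('n)" "(\<forall>x\<in>B. \<forall>y\<in>B. x \<noteq> y \<longrightarrow> x \<bullet> y = 0)"
      "\<forall>b\<in>B. norm b = 1 \<and> A *v b = (b \<bullet> (A *v b)) *\<^sub>R b"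
    using spectral_aux[OF sym subspace_UNIV, of "CARD('n)"] by blast
  obtain e where e: "bij_betw e (UNIV :: 'n set) B"
    using finite_same_card_bij[of "UNIV :: 'n set" B] B by auto
  have eB: "e j \<in> B" for j using e by (auto simp: bij_betw_def)
  have einj: "e j = e k \<Longrightarrow> j = k" for j k using e by (auto simp: bij_betw_def inj_def)
  define U :: "real^'n^'n" where "U = (\<chi> i j. e j $ i)"
  define d :: "real^'n" where "d = (\<chi> j. e j \<bullet> (A *v e j))"
  have col: "(\<chi> i. U $ i $ j) = e j" for j by (simp add: U_def vec_eq_iff)
  have ee: "e j \<bullet> e k = (if j = k then 1 else 0)" for j k
    using B(3,4) eB einj by (auto simp: norm_eq_1) (metis einj)
  have "transpose U ** U = mat 1"
  proof -
    have "(transpose U ** U) $ j $ k = e j \<bullet> e k" for j k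
      by (simp add: matrix_matrix_mult_def transpose_def U_def inner_vec_def)
    then show ?thesis by (simp add: vec_eq_iff ee mat_def)
  qed
  then have oU: "orthogonal_matrix U" by (simp add: orthogonal_matrix)
  then have UUt: "U ** transpose U = mat 1" by (simp add: orthogonal_matrix_def)
  have eig: "A *v e j = d $ j *\<^sub>R e j" for j using B(4) eB by (simp add: d_def)
  have AU: "A ** U = U ** diag_mat d"
  proof -
    have "(A ** U) $ i $ k = (A *v e k) $ i" for i k
      by (simp add: matrix_matrix_mult_def matrix_vector_mult_def U_def)
    moreover have "(U ** diag_mat d) $ i $ k = d $ k * e k $ i" for i k
      by (simp add: matrix_matrix_mult_def diag_mat_def U_def if_distrib cong: if_cong)
    ultimately show ?thesis by (simp add: vec_eq_iff eig)
  qed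
  have "A = A ** (U ** transpose U)" by (simp add: UUt)
  also have "\<dots> = U ** diag_mat d ** transpose U" by (simp add: matrix_mul_assoc AU)
  finally have "A = U ** diag_mat d ** transpose U" .
  moreover have "norm (\<chi> i. U $ i $ j) = 1" for j using B(4) eB by (simp add: col)
  moreover have "A *v (\<chi> i. U $ i $ j) = d $ j *\<^sub>R (\<chi> i. U $ i $ j)" for j by (simp add: col eig)
  ultimately show ?thesis using that oU by blast
qed

lemma sum_if_mult: "(\<Sum>k\<in>(UNIV::'a::finite set). (if i = k then f k else 0) * g k) = f i * (g i :: real)"
proof -
  have "(\<Sum>k\<in>UNIV. (if i = k then f k else 0) * g k) = (\<Sum>k\<in>UNIV. if i = k then f k * g k else 0)"
    by (rule sum.cong) auto
  also have "\<dots> = f i * g i" using sum.delta'[of UNIV i "\<lambda>k. f k * g k"] by simp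
  finally show ?thesis .
qed

lemma diag_mul: "diag_mat a ** diag_mat b = diag_mat (\<chi> i. a $ i * b $ i)"
proof -
  have "(\<Sum>k\<in>UNIV. (if i = k then a $ i else 0) * (if k = j then b $ k else 0))
      = (if i = j then a $ i * b $ i else 0)" for i j
  proof -
    have "(\<Sum>k\<in>UNIV. (if i = k then a $ i else 0) * (if k = j then b $ k else 0))
      = (\<Sum>k\<in>UNIV. (if i = k then a $ k else 0) * (if k = j then b $ k else 0))"
      by (rule sum.cong) auto
    also have "\<dots> = a $ i * (if i = j then b $ i else 0)" by (rule sum_if_mult)
    finally show ?thesis by simp
  qed
  then show ?thesis by (simp add: vec_eq_iff matrix_matrix_mult_def diag_mat_def)
qed

lemma transpose_diag: "transpose (diag_mat a) = diag_mat a"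
  by (simp add: vec_eq_iff transpose_def diag_mat_def)

lemma diag_mat_vec: "diag_mat a *v y = (\<chi> i. a $ i * y $ i)"
proof -
  have "(\<Sum>j\<in>UNIV. (if i = j then a $ i else 0) * y $ j) = a $ i * y $ i" for i
  proof -
    have "(\<Sum>j\<in>UNIV. (if i = j then a $ i else 0) * y $ j) = (\<Sum>j\<in>UNIV. (if i = j then a $ j else 0) * y $ j)"
      by (rule sum.cong) auto
    then show ?thesis by (simp add: sum_if_mult)
  qed
  then show ?thesis by (simp add: vec_eq_iff matrix_vector_mult_def diag_mat_def)
qed

lemma diag_quad: "y \<bullet> (diag_mat a *v y) = (\<Sum>i\<in>UNIV. a $ i * (y $ i)\<^sup>2)"
  by (simp add: diag_mat_vec inner_vec_def power2_eq_square mult_ac)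

lemma matrix_diff_ldistrib: "(A::real^'n^'m) ** (B - C) = A ** B - A ** C"
  by (simp add: vec_eq_iff matrix_matrix_mult_def sum_subtractf algebra_simps)

lemma matrix_diff_rdistrib: "((B::real^'n^'m) - C) ** A = B ** A - C ** A"
  by (simp add: vec_eq_iff matrix_matrix_mult_def sum_subtractf algebra_simps)

lemma inner_mat_left: "x \<bullet> (A *v y) = (transpose A *v x) \<bullet> (y::real^'n)"
  by (simp add: dot_lmul_matrix)

lemma sqrt_exists:
  fixes A :: "real^'n^'n"
  assumes A: "sym_posdef A"
  shows "\<exists>S. sym_posdef S \<and> S ** S = A"
proof -
  have sym: "transpose A = A" using A by (simp add: sym_posdef_def)
  obtain U d where U: "orthogonal_matrix U" "A = U ** diag_mat d ** transpose U"
    "\<And>j. norm (\<chi> i. U $ i $ j) = 1" "\<And>j. A *v (\<chi> i. U $ i $ j) = d $ j *\<^sub>R (\<chi> i. U $ i $ j)"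
    using spectral[OF sym] by blast
  have dpos: "d $ j > 0" for j
  proof -
    let ?e = "\<chi> i. U $ i $ j"
    have "?e \<noteq> 0" using U(3)[of j] by auto
    then have "?e \<bullet> (A *v ?e) > 0" using A by (simp add: sym_posdef_def)
    also have "?e \<bullet> (A *v ?e) = d $ j" using U(3)[of j] by (simp add: U(4) norm_eq_1)
    finally show ?thesis .
  qed
  have UtU: "transpose U ** U = mat 1" and UUt: "U ** transpose U = mat 1"
    using U(1) by (auto simp: orthogonal_matrix_def)
  define s :: "real^'n" where "s = (\<chi> j. sqrt (d $ j))"
  define S where "S = U ** diag_mat s ** transpose U"
  have "transpose S = S"
    by (simp add: S_def matrix_transpose_mul transpose_diag matrix_mul_assoc)
  moreover have "S ** S = A"
  proof -
    have "S ** S = U ** (diag_mat s ** ((transpose U ** U) ** diag_mat s)) ** transpose U"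
      by (simp add: S_def matrix_mul_assoc)
    also have "\<dots> = U ** diag_mat d ** transpose U"
    proof -
      have "(\<chi> i. s $ i * s $ i) = d" using dpos by (simp add: vec_eq_iff s_def less_imp_le)
      then show ?thesis by (simp add: UtU diag_mul)
    qed
    finally show ?thesis using U(2) by simp
  qed
  moreover have "x \<bullet> (S *v x) > 0" if "x \<noteq> 0" for x
  proof -
    define y where "y = transpose U *v x"
    have "U *v y = x" by (simp add: y_def matrix_vector_mul_assoc UUt del: transpose_matrix_vector)
    then have "y \<noteq> 0" using that by auto
    then obtain j where j: "y $ j \<noteq> 0" by (auto simp: vec_eq_iff)
    have "x \<bullet> (S *v x) = y \<bullet> (diag_mat s *v y)"
      by (simp add: S_def y_def matrix_vector_mul_assoc[symmetric] inner_mat_left del: transpose_matrix_vector)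
    also have "\<dots> = (\<Sum>i\<in>UNIV. s $ i * (y $ i)\<^sup>2)" by (rule diag_quad)
    also have "\<dots> > 0"
    proof (rule sum_pos2[of UNIV j])
      show "0 < s $ j * (y $ j)\<^sup>2" using dpos j by (simp add: s_def)
      show "\<And>i. i \<in> UNIV \<Longrightarrow> 0 \<le> s $ i * (y $ i)\<^sup>2" using dpos by (simp add: s_def less_imp_le)
    qed auto
    finally show ?thesis .
  qed
  ultimately show ?thesis by (auto simp: sym_posdef_def)
qed

lemma trace_quad_cols:
  fixes X S :: "real^'n^'n"
  shows "trace (transpose X ** (S ** X)) = (\<Sum>k\<in>UNIV. (\<chi> i. X $ i $ k) \<bullet> (S *v (\<chi> i. X $ i $ k)))"
  by (simp add: trace_def matrix_matrix_mult_def transpose_def inner_vec_def matrix_vector_mult_def)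

lemma trace_quad_rows:
  fixes X T :: "real^'n^'n"
  shows "trace (X ** (T ** transpose X)) = (\<Sum>k\<in>UNIV. X $ k \<bullet> (T *v X $ k))"
  by (simp add: trace_def matrix_matrix_mult_def transpose_def inner_vec_def matrix_vector_mult_def)

lemma matrix_mul_neg: "(A::real^'n^'m) ** (- B) = - (A ** B)"
  by (simp add: vec_eq_iff matrix_matrix_mult_def sum_negf)

lemma trace_neg: "trace (- (A::real^'n^'n)) = - trace A"
  by (simp add: trace_def sum_negf)

lemma sqrt_unique:
  fixes S T :: "real^'n^'n"
  assumes S: "sym_posdef S" and T: "sym_posdef T" and eq: "S ** S = T ** T"
  shows "S = T"
proof -
  define X where "X = S - T"
  have "S ** X + X ** T = S ** S - T ** T"
    by (simp add: X_def matrix_diff_ldistrib matrix_diff_rdistrib)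
  then have SX: "S ** X = - (X ** T)" using eq by (simp add: eq_neg_iff_add_eq_0)
  have "trace (transpose X ** (S ** X)) = - trace (transpose X ** (X ** T))"
    by (simp add: SX matrix_mul_neg trace_neg)
  also have "trace (transpose X ** (X ** T)) = trace (X ** (T ** transpose X))"
  proof -
    have "trace (transpose X ** (X ** T)) = trace ((X ** T) ** transpose X)" by (rule trace_mul_sym)
    also have "(X ** T) ** transpose X = X ** (T ** transpose X)" by (rule matrix_mul_assoc[symmetric])
    finally show ?thesis .
  qed
  finally have "trace (transpose X ** (S ** X)) = - trace (X ** (T ** transpose X))" .
  moreover have nn1: "\<And>k. (\<chi> i. X $ i $ k) \<bullet> (S *v (\<chi> i. X $ i $ k)) \<ge> 0"
    using S unfolding sym_posdef_def by (metis inner_zero_left less_eq_real_def)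
  moreover have nn2: "\<And>k. X $ k \<bullet> (T *v X $ k) \<ge> 0"
    using T unfolding sym_posdef_def by (metis inner_zero_left less_eq_real_def)
  ultimately have "(\<Sum>k\<in>UNIV. (\<chi> i. X $ i $ k) \<bullet> (S *v (\<chi> i. X $ i $ k))) = 0"
    unfolding trace_quad_cols trace_quad_rows
    by (smt (verit) sum_nonneg)
  then have "(\<chi> i. X $ i $ k) \<bullet> (S *v (\<chi> i. X $ i $ k)) = 0" for k
    using nn1 by (simp add: sum_nonneg_eq_0_iff)
  then have "(\<chi> i. X $ i $ k) = 0" for k
    using S unfolding sym_posdef_def by (metis less_irrefl)
  then have "X = 0" by (simp add: vec_eq_iff)
  then show ?thesis by (simp add: X_def)
qed

lemma mat_sqrt:
  assumes "sym_posdef A"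
  shows "sym_posdef (mat_sqrt A) \<and> mat_sqrt A ** mat_sqrt A = A"
proof -
  have "\<exists>!S. sym_posdef S \<and> S ** S = A"
    using sqrt_exists[OF assms] sqrt_unique by metis
  then show ?thesis unfolding mat_sqrt_def by (rule theI')
qed

lemma meas_vec_nth[measurable]: "(\<lambda>y::real^'n::finite. y $ i) \<in> borel_measurable borel"
  by (intro borel_measurable_continuous_onI continuous_intros)

lemma sum_Basis_comp: "(\<Sum>b\<in>(Basis::(real^'n::finite) set). f b *\<^sub>R b) $ i = f (axis i 1)"
proof -
  have "(\<Sum>b\<in>(Basis::(real^'n::finite) set). f b *\<^sub>R b) $ i = (\<Sum>b\<in>Basis. f b * b $ i)"
    by (simp add: sum_component)
  also have "\<dots> = (\<Sum>j\<in>UNIV. f (axis j 1) * axis j 1 $ i)" by (rule sum_Basis_cart)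
  also have "\<dots> = (\<Sum>j\<in>UNIV. if j = i then f (axis j 1) else 0)"
    by (rule sum.cong) (auto simp: axis_def)
  also have "\<dots> = f (axis i 1)" by simp
  finally show ?thesis .
qed

lemma lborel_prod:
  fixes h :: "'n::finite \<Rightarrow> real \<Rightarrow> real"
  assumes int: "\<And>i. integrable lborel (h i)"
  shows "integrable lborel (\<lambda>y::real^'n. \<Prod>i\<in>UNIV. h i (y $ i))"
    and "(\<integral>y. (\<Prod>i\<in>UNIV. h i (y $ i)) \<partial>lborel) = (\<Prod>i\<in>UNIV. \<integral>x. h i x \<partial>lborel)"
proof -
  interpret P: product_sigma_finite "\<lambda>_::real^'n. lborel :: real measure"
    by standard
  define F where "F = (\<lambda>f. \<Sum>b\<in>(Basis::(real^'n) set). f b *\<^sub>R b)"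
  define H where "H = (\<lambda>b::real^'n. h (axis_index b))"
  have hm[measurable]: "h i \<in> borel_measurable borel" for i using int[of i] by auto
  have Fm[measurable]: "F \<in> measurable (\<Pi>\<^sub>M b\<in>Basis. lborel) borel"
    unfolding F_def by measurable
  have g_m[measurable]: "(\<lambda>y::real^'n. \<Prod>i\<in>UNIV. h i (y $ i)) \<in> borel_measurable borel"
    by measurable
  have eq: "(\<Prod>i\<in>UNIV. h i (F f $ i)) = (\<Prod>b\<in>Basis. H b (f b))" for f
    by (simp only: F_def sum_Basis_comp) (simp add: prod_Basis_cart H_def)
  have lb: "lborel = distr (\<Pi>\<^sub>M b\<in>Basis. lborel) borel F"
    unfolding F_def by (rule lborel_eq)
  have intH: "\<And>b. b \<in> Basis \<Longrightarrow> integrable lborel (H b)" by (simp add: H_def int)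
  have "integrable (\<Pi>\<^sub>M b\<in>Basis. lborel) (\<lambda>f. \<Prod>b\<in>Basis. H b (f b))"
    by (rule P.product_integrable_prod) (simp_all add: intH)
  then have "integrable (\<Pi>\<^sub>M b\<in>Basis. lborel) (\<lambda>f. \<Prod>i\<in>UNIV. h i (F f $ i))"
    by (simp add: eq)
  then show "integrable lborel (\<lambda>y::real^'n. \<Prod>i\<in>UNIV. h i (y $ i))"
    by (subst lb, subst integrable_distr_eq) simp_all
  have "(\<integral>y. (\<Prod>i\<in>UNIV. h i (y $ i)) \<partial>lborel)
      = (\<integral>f. (\<Prod>i\<in>UNIV. h i (F f $ i)) \<partial>(\<Pi>\<^sub>M b\<in>Basis. lborel))"
    by (subst lb, subst integral_distr) simp_all
  also have "\<dots> = (\<integral>f. (\<Prod>b\<in>Basis. H b (f b)) \<partial>(\<Pi>\<^sub>M b\<in>Basis. lborel))"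
    by (simp add: eq)
  also have "\<dots> = (\<Prod>b\<in>Basis. integral\<^sup>L lborel (H b))"
    by (rule P.product_integral_prod) (simp_all add: intH)
  also have "\<dots> = (\<Prod>i\<in>UNIV. \<integral>x. h i x \<partial>lborel)"
    by (simp add: prod_Basis_cart H_def)
  finally show "(\<integral>y. (\<Prod>i\<in>UNIV. h i (y $ i)) \<partial>lborel) = (\<Prod>i\<in>UNIV. \<integral>x. h i x \<partial>lborel)" .
qed

definition std_vec :: "real^'n::finite \<Rightarrow> real" where
  "std_vec y = (\<Prod>i\<in>UNIV. std_normal_density (y $ i))"

lemma std_mom:
  fixes e :: "'n::finite \<Rightarrow> nat"
  shows "integrable lborel (\<lambda>y::real^'n. \<Prod>i\<in>UNIV. std_normal_density (y $ i) * (y $ i) ^ e i)"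
    and "(\<integral>y. (\<Prod>i\<in>UNIV. std_normal_density (y $ i) * (y $ i) ^ e i) \<partial>lborel)
         = (\<Prod>i\<in>UNIV. \<integral>x. std_normal_density x * x ^ e i \<partial>lborel)"
  using lborel_prod[where h="\<lambda>i x. std_normal_density x * x ^ e i"] integrable_std_normal_moment
  by auto

lemma mom0: "(\<integral>x. std_normal_density x * x ^ 0 \<partial>lborel) = 1"
  using integral_std_normal_moment_even[of 0] by simp
lemma mom1: "(\<integral>x. std_normal_density x * x ^ 1 \<partial>lborel) = 0"
  using integral_std_normal_moment_odd[of 0] by simp
lemma mom2: "(\<integral>x. std_normal_density x * x ^ 2 \<partial>lborel) = 1"
  using integral_std_normal_moment_even[of 1] by (simp add: fact_numeral)

lemma std_vec_int: "integrable lborel (std_vec :: real^'n::finite \<Rightarrow> real)"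
  using std_mom(1)[where e="\<lambda>_. 0"] by (simp add: std_vec_def[abs_def])

lemma std_vec_integral: "(\<integral>y. std_vec (y::real^'n::finite) \<partial>lborel) = 1"
  using std_mom(2)[where e="\<lambda>_. 0"] mom0 by (simp add: std_vec_def)

lemma std_vec_pair:
  fixes j k :: "'n::finite"
  shows "integrable lborel (\<lambda>y::real^'n. std_vec y * (y $ j * y $ k))"
    and "(\<integral>y. std_vec y * (y $ j * y $ k) \<partial>lborel) = (if j = k then 1 else 0)"
proof -
  define e where "e i = (if i = j then 1 else 0) + (if i = k then 1 else (0::nat))" for i
  have pw: "(y $ i) ^ e i = (if i = j then y $ i else 1) * (if i = k then y $ i else 1)" for y :: "real^'n" and i
    by (simp add: e_def power_add)
  have eq: "(\<Prod>i\<in>UNIV. std_normal_density (y $ i) * (y $ i) ^ e i) = std_vec y * (y $ j * y $ k)" for y :: "real^'n"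
    by (simp add: pw prod.distrib std_vec_def prod.delta' mult_ac)
  show "integrable lborel (\<lambda>y::real^'n. std_vec y * (y $ j * y $ k))"
    using std_mom(1)[of e] by (simp add: eq)
  have "(\<integral>y. std_vec y * (y $ j * y $ k) \<partial>lborel) = (\<Prod>i\<in>UNIV. \<integral>x. std_normal_density x * x ^ e i \<partial>lborel)"
    using std_mom(2)[of e] by (simp add: eq)
  also have "\<dots> = (if j = k then 1 else 0)"
  proof (cases "j = k")
    case True
    have "(\<integral>x. std_normal_density x * x ^ e i \<partial>lborel) = 1" for i
    proof -
      have "e i = (if i = j then 2 else 0)" using True by (simp add: e_def)
      then show ?thesis using mom0 mom2 by (cases "i = j") simp_all
    qed
    then show ?thesis using True by simp
  next
    case False
    then have "(\<integral>x. std_normal_density x * x ^ e j \<partial>lborel) = 0"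
      using mom1 by (simp add: e_def)
    then show ?thesis using False by (metis UNIV_I finite prod_zero)
  qed
  finally show "(\<integral>y. std_vec y * (y $ j * y $ k) \<partial>lborel) = (if j = k then 1 else 0)" .
qed

lemma lborel_diag:
  fixes s :: "real^'n::finite"
  assumes s: "\<And>i. s $ i \<noteq> 0"
  shows "lborel = density (distr lborel borel ((*v) (diag_mat s))) (\<lambda>_. ennreal (\<Prod>i\<in>UNIV. \<bar>s $ i\<bar>))"
proof -
  define c where "c = (\<lambda>b::real^'n. s $ axis_index b)"
  have c: "\<And>j. j \<in> Basis \<Longrightarrow> c j \<noteq> 0" using s by (auto simp: c_def Basis_vec_def)
  have T: "(\<lambda>x. 0 + (\<Sum>j\<in>Basis. (c j * (x \<bullet> j)) *\<^sub>R j)) = (*v) (diag_mat s)"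
  proof
    fix x :: "real^'n"
    show "0 + (\<Sum>j\<in>Basis. (c j * (x \<bullet> j)) *\<^sub>R j) = diag_mat s *v x"
      by (simp only: vec_eq_iff add_0_left sum_Basis_comp) (simp add: c_def inner_axis diag_mat_vec)
  qed
  have K: "(\<Prod>j\<in>Basis. \<bar>c j\<bar>) = (\<Prod>i\<in>UNIV. \<bar>s $ i\<bar>)"
    by (simp add: prod_Basis_cart c_def)
  show ?thesis
    using lborel_affine_euclidean[where c=c and t=0, OF c] unfolding T K .
qed

lemma cov_UD:
  fixes U :: "real^('n::{finite,linorder})^('n::{finite,linorder})" and s :: "real^('n::{finite,linorder})"
  assumes U: "orthogonal_matrix U" and s: "\<And>i. s $ i > 0"
    and g[measurable]: "g \<in> borel_measurable borel"
  shows "integrable lborel g \<longleftrightarrow> integrable lborel (\<lambda>y. g ((U ** diag_mat s) *v y))"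
    and "integral\<^sup>L lborel g = (\<Prod>i\<in>UNIV. s $ i) * integral\<^sup>L lborel (\<lambda>y. g ((U ** diag_mat s) *v y))"
proof -
  define K where "K = (\<Prod>i\<in>UNIV. s $ i)"
  have K: "K > 0" unfolding K_def using s by (simp add: prod_pos)
  have sabs: "(\<Prod>i\<in>UNIV. \<bar>s $ i\<bar>) = K" unfolding K_def using s by (simp add: less_imp_le)
  have ld: "lborel = density (distr lborel borel ((*v) (diag_mat s))) (\<lambda>_. ennreal K)"
    using lborel_diag[of s] s unfolding sabs by (metis less_irrefl)
  have gU[measurable]: "(\<lambda>x. g (U *v x)) \<in> borel_measurable borel" by measurable
  have comp: "g ((U ** diag_mat s) *v y) = g (U *v (diag_mat s *v y))" for y
    by (simp add: matrix_vector_mul_assoc)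
  have "integrable lborel g \<longleftrightarrow> integrable (distr lborel borel ((*v) U)) g"
    by (simp add: lborel_orth[OF U])
  also have "\<dots> \<longleftrightarrow> integrable lborel (\<lambda>x. g (U *v x))"
    by (rule integrable_distr_eq) simp_all
  also have "\<dots> \<longleftrightarrow> integrable (density (distr lborel borel ((*v) (diag_mat s))) (\<lambda>_. ennreal K)) (\<lambda>x. g (U *v x))"
    by (simp add: ld[symmetric])
  also have "\<dots> \<longleftrightarrow> integrable (distr lborel borel ((*v) (diag_mat s))) (\<lambda>x. K *\<^sub>R g (U *v x))"
    using K by (intro integrable_density) simp_all
  also have "\<dots> \<longleftrightarrow> integrable lborel (\<lambda>y. K *\<^sub>R g (U *v (diag_mat s *v y)))"
    by (rule integrable_distr_eq) simp_all
  also have "\<dots> \<longleftrightarrow> integrable lborel (\<lambda>y. g ((U ** diag_mat s) *v y))"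
    using K by (simp add: comp)
  finally show "integrable lborel g \<longleftrightarrow> integrable lborel (\<lambda>y. g ((U ** diag_mat s) *v y))" .
  have "integral\<^sup>L lborel g = integral\<^sup>L (distr lborel borel ((*v) U)) g"
    by (simp add: lborel_orth[OF U])
  also have "\<dots> = integral\<^sup>L lborel (\<lambda>x. g (U *v x))"
    by (rule integral_distr) simp_all
  also have "\<dots> = integral\<^sup>L (density (distr lborel borel ((*v) (diag_mat s))) (\<lambda>_. ennreal K)) (\<lambda>x. g (U *v x))"
    by (simp add: ld[symmetric])
  also have "\<dots> = integral\<^sup>L (distr lborel borel ((*v) (diag_mat s))) (\<lambda>x. K *\<^sub>R g (U *v x))"
    using K by (intro integral_density) simp_all
  also have "\<dots> = integral\<^sup>L lborel (\<lambda>y. K *\<^sub>R g (U *v (diag_mat s *v y)))"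
    by (rule integral_distr) simp_all
  also have "\<dots> = K * integral\<^sup>L lborel (\<lambda>y. g ((U ** diag_mat s) *v y))"
    by (simp add: comp)
  finally show "integral\<^sup>L lborel g = (\<Prod>i\<in>UNIV. s $ i) * integral\<^sup>L lborel (\<lambda>y. g ((U ** diag_mat s) *v y))"
    by (simp add: K_def)
qed

lemma matrix_inv_eq:
  fixes A X :: "real^'n^'n"
  assumes "A ** X = mat 1" "X ** A = mat 1"
  shows "matrix_inv A = X"
proof -
  define Y where "Y = matrix_inv A"
  have "A ** Y = mat 1 \<and> Y ** A = mat 1"
    unfolding Y_def matrix_inv_def by (rule someI[of _ X]) (use assms in simp)
  then have "Y = Y ** (A ** X)" "Y ** A = mat 1" by (simp_all add: assms)
  then have "Y = X" by (simp add: matrix_mul_assoc)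
  then show ?thesis by (simp add: Y_def)
qed

lemma spectral_pd:
  fixes A :: "real^'n^'n"
  assumes A: "sym_posdef A"
  obtains U d where "orthogonal_matrix U" "A = U ** diag_mat d ** transpose U" "\<And>j. d $ j > 0"
proof -
  have sym: "transpose A = A" using A by (simp add: sym_posdef_def)
  obtain U d where U: "orthogonal_matrix U" "A = U ** diag_mat d ** transpose U"
    "\<And>j. norm (\<chi> i. U $ i $ j) = 1" "\<And>j. A *v (\<chi> i. U $ i $ j) = d $ j *\<^sub>R (\<chi> i. U $ i $ j)"
    using spectral[OF sym] by blast
  have dpos: "d $ j > 0" for j
  proof -
    let ?e = "\<chi> i. U $ i $ j"
    have "?e \<noteq> 0" using U(3)[of j] by auto
    then have "?e \<bullet> (A *v ?e) > 0" using A by (simp add: sym_posdef_def)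
    also have "?e \<bullet> (A *v ?e) = d $ j" using U(3)[of j] by (simp add: U(4) norm_eq_1)
    finally show ?thesis .
  qed
  show ?thesis using that U(1,2) dpos by blast
qed

lemma sqrt_prod: "finite S \<Longrightarrow> sqrt (\<Prod>i\<in>S. f i) = (\<Prod>i\<in>S. sqrt (f i))"
  by (induction S rule: finite_induct) (simp_all add: real_sqrt_mult)

lemma meas_quad[measurable]: "(\<lambda>x::real^'n::finite. x \<bullet> (M *v x)) \<in> borel_measurable borel"
  by measurable

lemma meas_gauss[measurable]: "gauss_density S \<in> borel_measurable borel"
  unfolding gauss_density_def[abs_def] by measurable

lemma orth_inner:
  assumes "orthogonal_matrix U"
  shows "(U *v a) \<bullet> (U *v b) = a \<bullet> (b :: real^'n)"
proof -
  have "(U *v a) \<bullet> (U *v b) = (transpose U *v (U *v a)) \<bullet> b" by (rule inner_mat_left)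
  also have "transpose U *v (U *v a) = a" using assms
    by (simp add: matrix_vector_mul_assoc orthogonal_matrix del: transpose_matrix_vector)
  finally show ?thesis .
qed

lemma diag_one: "diag_mat (\<chi> i. 1) = (mat 1 :: real^'n^'n)"
  by (simp add: vec_eq_iff diag_mat_def mat_def)

lemma det_diag: "det (diag_mat d) = (\<Prod>i\<in>UNIV. d $ i)"
  by (subst det_diagonal) (simp_all add: diag_mat_def)

lemma std_vec_alt: "std_vec (y::real^'n::finite) = exp (- (y \<bullet> y) / 2) / sqrt (2 * pi) ^ CARD('n)"
proof -
  have "std_vec y = (\<Prod>i\<in>UNIV. (1 / sqrt (2 * pi)) * exp (- (y $ i)\<^sup>2 / 2))"
    by (simp add: std_vec_def std_normal_density_def)
  also have "\<dots> = (\<Prod>i\<in>(UNIV::'n set). 1 / sqrt (2 * pi)) * (\<Prod>i\<in>UNIV. exp (- (y $ i)\<^sup>2 / 2))"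
    by (simp only: prod.distrib)
  also have "\<dots> = (1 / sqrt (2 * pi)) ^ CARD('n) * exp (\<Sum>i\<in>UNIV. - (y $ i)\<^sup>2 / 2)"
    by (simp only: prod_constant exp_sum[OF finite, symmetric])
  also have "(\<Sum>i\<in>UNIV. - (y $ i)\<^sup>2 / 2) = - (y \<bullet> y) / 2"
    by (simp add: inner_vec_def power2_eq_square sum_divide_distrib sum_negf)
  finally show ?thesis by (simp add: power_one_over)
qed

lemma quad_expand: "y \<bullet> (N *v y) = (\<Sum>j\<in>UNIV. \<Sum>k\<in>UNIV. N $ j $ k * (y $ j * y $ k))"
  by (simp add: inner_vec_def matrix_vector_mult_def sum_distrib_left mult_ac)

lemma gauss_props:
  fixes A M :: "real^('n::{finite,linorder})^('n::{finite,linorder})"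
  assumes A: "sym_posdef A"
  shows "integrable lborel (gauss_density A)"
    and "integral\<^sup>L lborel (gauss_density A) = 1"
    and "integrable lborel (\<lambda>x. gauss_density A x * (x \<bullet> (M *v x)))"
    and "(\<integral>x. gauss_density A x * (x \<bullet> (M *v x)) \<partial>lborel) = trace (M ** A)"
    and "det A > 0"
proof -
  obtain U d where U: "orthogonal_matrix U" "A = U ** diag_mat d ** transpose U" and d: "\<And>j. d $ j > 0"
    using spectral_pd[OF A] by blast
  have UtU: "transpose U ** U = mat 1" and UUt: "U ** transpose U = mat 1"
    using U(1) by (auto simp: orthogonal_matrix_def)
  define s :: "real^('n::{finite,linorder})" where "s = (\<chi> i. sqrt (d $ i))"
  have spos: "s $ i > 0" for i using d by (simp add: s_def)
  define L where "L = U ** diag_mat s"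
  define K where "K = (\<Prod>i\<in>UNIV. s $ i)"
  have Kpos: "K > 0" unfolding K_def using spos by (simp add: prod_pos)
  define Ai where "Ai = U ** diag_mat (\<chi> i. 1 / d $ i) ** transpose U"
  have "A ** Ai = U ** (diag_mat d ** (transpose U ** U) ** diag_mat (\<chi> i. 1 / d $ i)) ** transpose U"
    by (simp add: U(2) Ai_def matrix_mul_assoc)
  also have "\<dots> = mat 1"
  proof -
    have "(\<chi> i. d $ i * (1 / d $ i)) = (\<chi> i. 1)" using d by (simp add: vec_eq_iff less_imp_neq[symmetric])
    then show ?thesis by (simp add: UtU diag_mul diag_one UUt)
  qed
  finally have AAi: "A ** Ai = mat 1" .
  have "Ai ** A = U ** (diag_mat (\<chi> i. 1 / d $ i) ** (transpose U ** U) ** diag_mat d) ** transpose U"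
    by (simp add: U(2) Ai_def matrix_mul_assoc)
  also have "\<dots> = mat 1"
  proof -
    have "(\<chi> i. 1 / d $ i * d $ i) = (\<chi> i. 1)" using d by (simp add: vec_eq_iff less_imp_neq[symmetric])
    then show ?thesis by (simp add: UtU diag_mul diag_one UUt)
  qed
  finally have AiA: "Ai ** A = mat 1" .
  have Ainv: "matrix_inv A = Ai" by (rule matrix_inv_eq[OF AAi AiA])
  have detA: "det A = (\<Prod>i\<in>UNIV. d $ i)"
  proof -
    have "det U * det U = 1" using det_orthogonal_matrix[OF U(1)] by auto
    then show ?thesis by (simp add: U(2) det_mul det_diag)
  qed
  show "det A > 0" unfolding detA using d by (simp add: prod_pos)
  have LLt: "L ** transpose L = A"
  proof -
    have "L ** transpose L = U ** (diag_mat s ** diag_mat s) ** transpose U"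
      by (simp add: L_def matrix_transpose_mul transpose_diag matrix_mul_assoc)
    also have "diag_mat s ** diag_mat s = diag_mat d"
    proof -
      have "(\<chi> i. s $ i * s $ i) = d" using d by (simp add: vec_eq_iff s_def less_imp_le)
      then show ?thesis by (simp add: diag_mul)
    qed
    finally show ?thesis using U(2) by simp
  qed
  have quad: "(L *v y) \<bullet> (Ai *v (L *v y)) = y \<bullet> y" for y
  proof -
    define z where "z = diag_mat s *v y"
    define w :: "real^('n::{finite,linorder})" where "w = (\<chi> i. y $ i / s $ i)"
    have Lz: "L *v y = U *v z" by (simp add: L_def z_def matrix_vector_mul_assoc)
    have AiU: "Ai ** U = U ** diag_mat (\<chi> i. 1 / d $ i)"
      by (simp add: Ai_def matrix_mul_assoc[symmetric] UtU)
    have "Ai *v (U *v z) = U *v (diag_mat (\<chi> i. 1 / d $ i) *v z)"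
      by (simp add: matrix_vector_mul_assoc AiU)
    also have "\<dots> = U *v w"
    proof -
      have h: "sqrt (d $ i) * y $ i / d $ i = y $ i / sqrt (d $ i)" for i
      proof -
        have r: "sqrt (d $ i) > 0" "sqrt (d $ i) * sqrt (d $ i) = d $ i" using d[of i] by (simp_all add: less_imp_le)
        show ?thesis using r d[of i] by (simp add: field_simps)
      qed
      have "diag_mat (\<chi> i. 1 / d $ i) *v z = w"
        by (simp add: z_def w_def diag_mat_vec vec_eq_iff s_def h)
      then show ?thesis by simp
    qed
    finally have "(L *v y) \<bullet> (Ai *v (L *v y)) = z \<bullet> w" by (simp add: Lz orth_inner[OF U(1)])
    also have "\<dots> = y \<bullet> y"
      using spos by (simp add: z_def w_def diag_mat_vec inner_vec_def less_imp_neq[symmetric])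
    finally show ?thesis .
  qed
  have sq: "sqrt ((2 * pi) ^ CARD('n) * det A) = sqrt (2 * pi) ^ CARD('n) * K"
    by (simp add: detA real_sqrt_mult real_sqrt_power sqrt_prod K_def s_def power_mult_distrib)
  have key: "K * gauss_density A (L *v y) = std_vec y" for y
  proof -
    have "gauss_density A (L *v y) = exp (- (y \<bullet> y) / 2) / (sqrt (2 * pi) ^ CARD('n) * K)"
      by (simp only: gauss_density_def Ainv quad sq)
    then show ?thesis using Kpos by (simp add: std_vec_alt)
  qed
  have gm: "(\<lambda>y. gauss_density A (L *v y)) \<in> borel_measurable borel" by measurable
  have "integrable lborel (gauss_density A) \<longleftrightarrow> integrable lborel (\<lambda>y. gauss_density A (L *v y))"
    unfolding L_def by (rule cov_UD(1)[OF U(1) spos]) simp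
  also have "\<dots> \<longleftrightarrow> integrable lborel (\<lambda>y. K * gauss_density A (L *v y))"
    using Kpos by simp
  finally show intA: "integrable lborel (gauss_density A)"
    using std_vec_int by (simp add: key[abs_def])
  have "integral\<^sup>L lborel (gauss_density A) = K * (\<integral>y. gauss_density A (L *v y) \<partial>lborel)"
    unfolding L_def K_def by (rule cov_UD(2)[OF U(1) spos]) simp
  also have "\<dots> = (\<integral>y. K * gauss_density A (L *v y) \<partial>lborel)" by simp
  also have "\<dots> = 1" by (simp add: key std_vec_integral)
  finally show "integral\<^sup>L lborel (gauss_density A) = 1" .
  define N where "N = transpose L ** M ** L"
  have qN: "(L *v y) \<bullet> (M *v (L *v y)) = y \<bullet> (N *v y)" for y
  proof -
    have "(L *v y) \<bullet> (M *v (L *v y)) = y \<bullet> (transpose L *v (M *v (L *v y)))"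
      using inner_mat_left[of y "transpose L" "M *v (L *v y)"] by (simp del: transpose_matrix_vector)
    then show ?thesis by (simp add: N_def matrix_vector_mul_assoc matrix_mul_assoc del: transpose_matrix_vector)
  qed
  have key2: "K * (gauss_density A (L *v y) * ((L *v y) \<bullet> (M *v (L *v y))))
      = (\<Sum>j\<in>UNIV. \<Sum>k\<in>UNIV. N $ j $ k * (std_vec y * (y $ j * y $ k)))" for y
  proof -
    have "K * (gauss_density A (L *v y) * ((L *v y) \<bullet> (M *v (L *v y)))) = std_vec y * (y \<bullet> (N *v y))"
      by (simp add: qN key[symmetric])
    also have "\<dots> = (\<Sum>j\<in>UNIV. \<Sum>k\<in>UNIV. N $ j $ k * (std_vec y * (y $ j * y $ k)))"
      by (simp add: quad_expand sum_distrib_left mult_ac)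
    finally show ?thesis .
  qed
  have int2: "integrable lborel (\<lambda>y. \<Sum>j\<in>UNIV. \<Sum>k\<in>UNIV. N $ j $ k * (std_vec y * (y $ j * y $ k)))"
    by (simp add: std_vec_pair(1))
  have "integrable lborel (\<lambda>x. gauss_density A x * (x \<bullet> (M *v x)))
      \<longleftrightarrow> integrable lborel (\<lambda>y. gauss_density A (L *v y) * ((L *v y) \<bullet> (M *v (L *v y))))"
    unfolding L_def by (rule cov_UD(1)[OF U(1) spos]) simp
  also have "\<dots> \<longleftrightarrow> integrable lborel (\<lambda>y. K * (gauss_density A (L *v y) * ((L *v y) \<bullet> (M *v (L *v y)))))"
    using Kpos by simp
  finally show "integrable lborel (\<lambda>x. gauss_density A x * (x \<bullet> (M *v x)))"
    using int2 by (simp only: key2)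
  have "(\<integral>x. gauss_density A x * (x \<bullet> (M *v x)) \<partial>lborel)
      = K * (\<integral>y. gauss_density A (L *v y) * ((L *v y) \<bullet> (M *v (L *v y))) \<partial>lborel)"
    unfolding L_def K_def by (rule cov_UD(2)[OF U(1) spos]) simp
  also have "\<dots> = (\<integral>y. K * (gauss_density A (L *v y) * ((L *v y) \<bullet> (M *v (L *v y)))) \<partial>lborel)"
    by simp
  also have "\<dots> = (\<integral>y. (\<Sum>j\<in>UNIV. \<Sum>k\<in>UNIV. N $ j $ k * (std_vec y * (y $ j * y $ k))) \<partial>lborel)"
    by (simp only: key2)
  also have "\<dots> = (\<Sum>j\<in>UNIV. \<Sum>k\<in>UNIV. N $ j $ k * (if j = k then 1 else 0))"
    by (simp add: integral_sum integrable_sum std_vec_pair)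
  also have "\<dots> = trace N"
  proof -
    have "(\<Sum>k\<in>UNIV. N $ j $ k * (if j = k then 1 else 0)) = N $ j $ j" for j
    proof -
      have "(\<Sum>k\<in>UNIV. N $ j $ k * (if j = k then 1 else 0)) = (\<Sum>k\<in>UNIV. (if j = k then 1 else 0) * N $ j $ k)"
        by (simp add: mult.commute)
      also have "\<dots> = N $ j $ j" using sum_if_mult[of j "\<lambda>_. 1" "\<lambda>k. N $ j $ k"] by simp
      finally show ?thesis .
    qed
    then show ?thesis by (simp add: trace_def)
  qed
  also have "trace N = trace (M ** A)"
  proof -
    have "trace N = trace ((transpose L ** M) ** L)" by (simp add: N_def)
    also have "\<dots> = trace (L ** (transpose L ** M))" by (rule trace_mul_sym)
    also have "\<dots> = trace (A ** M)" by (simp add: matrix_mul_assoc LLt)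
    also have "\<dots> = trace (M ** A)" by (rule trace_mul_sym)
    finally show ?thesis .
  qed
  finally show "(\<integral>x. gauss_density A x * (x \<bullet> (M *v x)) \<partial>lborel) = trace (M ** A)" .
qed

lemma matrix_inv_props:
  fixes A :: "real^'n^'n"
  assumes "det A \<noteq> 0"
  shows "A ** matrix_inv A = mat 1" "matrix_inv A ** A = mat 1"
proof -
  have "invertible A" using assms by (simp add: invertible_det_nz)
  then obtain X where "A ** X = mat 1" "X ** A = mat 1" unfolding invertible_def by blast
  then have "matrix_inv A = X" by (rule matrix_inv_eq)
  then show "A ** matrix_inv A = mat 1" "matrix_inv A ** A = mat 1" using \<open>A ** X = mat 1\<close> \<open>X ** A = mat 1\<close> by simp_all
qed

lemma gauss_pos:
  assumes "det S > 0"
  shows "gauss_density S x > 0"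
  using assms by (simp add: gauss_density_def)

lemma ln_gauss:
  fixes S :: "real^('n::finite)^('n::finite)"
  assumes "det S > 0"
  shows "ln (gauss_density S x) = - (x \<bullet> (matrix_inv S *v x)) / 2 - (CARD('n) * ln (2 * pi) + ln (det S)) / 2"
proof -
  have pos: "(2 * pi) ^ CARD('n) * det S > 0" using assms by simp
  have "ln (gauss_density S x) = - (x \<bullet> (matrix_inv S *v x)) / 2 - ln (sqrt ((2 * pi) ^ CARD('n) * det S))"
    using pos assms by (simp add: gauss_density_def ln_div)
  also have "ln (sqrt ((2 * pi) ^ CARD('n) * det S)) = (CARD('n) * ln (2 * pi) + ln (det S)) / 2"
    using pos assms by (simp add: ln_sqrt ln_mult ln_realpow algebra_simps)
  finally show ?thesis .
qed

lemma KL_gauss: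
  fixes A B :: "real^('n::{finite,linorder})^('n::{finite,linorder})"
  assumes A: "sym_posdef A" and B: "det B > 0"
  shows "KL (gaussian A) (gaussian B) = (trace (matrix_inv B ** A) - CARD('n) + ln (det B) - ln (det A)) / 2"
proof -
  have dA: "det A > 0" using gauss_props(5)[OF A] .
  define c where "c = (ln (det B) - ln (det A)) / 2"
  have "KL (gaussian A) (gaussian B) =
      (\<integral>x. gauss_density A x * log (exp 1) (gauss_density A x / gauss_density B x) \<partial>lborel)"
    unfolding KL_def gaussian_def
  proof (rule lborel.KL_density_density)
    have nzB: "gauss_density B x \<noteq> 0" for x using gauss_pos[OF B, of x] by simp
    show "AE x in lborel. gauss_density B x = 0 \<longrightarrow> gauss_density A x = 0"
      by (simp add: nzB)
  qed (auto simp: gauss_pos[OF B] gauss_pos[OF dA] less_imp_le)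
  also have "\<dots> = (\<integral>x. (1/2) * (gauss_density A x * (x \<bullet> ((matrix_inv B - matrix_inv A) *v x)))
                        + c * gauss_density A x \<partial>lborel)"
  proof (rule Bochner_Integration.integral_cong[OF refl])
    fix x :: "real^('n::{finite,linorder})"
    have "log (exp 1) (gauss_density A x / gauss_density B x) = ln (gauss_density A x) - ln (gauss_density B x)"
      using gauss_pos[OF B, of x] gauss_pos[OF dA, of x] by (simp add: log_def ln_div)
    also have "\<dots> = (1/2) * (x \<bullet> ((matrix_inv B - matrix_inv A) *v x)) + c"
      by (simp add: ln_gauss[OF B] ln_gauss[OF dA] c_def matrix_vector_mult_diff_rdistrib inner_diff_right field_simps)
    finally have L: "log (exp 1) (gauss_density A x / gauss_density B x) = (1/2) * (x \<bullet> ((matrix_inv B - matrix_inv A) *v x)) + c" .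
    show "gauss_density A x * log (exp 1) (gauss_density A x / gauss_density B x)
      = (1/2) * (gauss_density A x * (x \<bullet> ((matrix_inv B - matrix_inv A) *v x))) + c * gauss_density A x"
      unfolding L by (simp add: algebra_simps)
  qed
  also have "\<dots> = (1/2) * trace ((matrix_inv B - matrix_inv A) ** A) + c"
    using gauss_props(3,4)[OF A, of "matrix_inv B - matrix_inv A"] gauss_props(1,2)[OF A] by simp
  also have "trace ((matrix_inv B - matrix_inv A) ** A) = trace (matrix_inv B ** A) - CARD('n)"
    using matrix_inv_props(2)[of A] dA by (simp add: matrix_diff_rdistrib trace_sub trace_I)
  finally show ?thesis by (simp add: c_def field_simps)
qed

lemma KL_SDS:
  fixes A S :: "real^('n::{finite,linorder})^('n::{finite,linorder})" and d :: "real^('n::{finite,linorder})"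
  assumes A: "sym_posdef A" and SS: "S ** S = A" and d: "\<And>i. d $ i > 0"
  shows "KL (gaussian A) (gaussian (S ** diag_mat d ** S))
       = ((\<Sum>i\<in>UNIV. 1 / d $ i) - CARD('n) + (\<Sum>i\<in>UNIV. ln (d $ i))) / 2"
proof -
  have dA: "det A > 0" using gauss_props(5)[OF A] .
  have dAS: "det A = det S * det S" using SS by (metis det_mul)
  have dS: "det S \<noteq> 0" using dA dAS by auto
  have pd: "(\<Prod>i\<in>UNIV. d $ i) > 0" using d by (simp add: prod_pos)
  define B where "B = S ** diag_mat d ** S"
  have dB: "det B = det A * (\<Prod>i\<in>UNIV. d $ i)" by (simp add: B_def det_mul det_diag dAS)
  have dBpos: "det B > 0" using dA pd by (simp add: dB)
  define Si where "Si = matrix_inv S"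
  have SSi: "S ** Si = mat 1" "Si ** S = mat 1" using matrix_inv_props[OF dS] by (simp_all add: Si_def)
  define Di where "Di = diag_mat (\<chi> i. 1 / d $ i)"
  have DDi: "diag_mat d ** Di = mat 1" "Di ** diag_mat d = mat 1"
  proof -
    have "(\<chi> i. d $ i * (1 / d $ i)) = (\<chi> i. 1)" "(\<chi> i. 1 / d $ i * d $ i) = (\<chi> i. 1)"
      using d by (simp_all add: vec_eq_iff less_imp_neq[symmetric])
    then show "diag_mat d ** Di = mat 1" "Di ** diag_mat d = mat 1"
      by (simp_all add: Di_def diag_mul diag_one)
  qed
  define X where "X = Si ** Di ** Si"
  have "B ** X = S ** (diag_mat d ** ((S ** Si) ** Di)) ** Si"
    by (simp add: B_def X_def matrix_mul_assoc)
  also have "\<dots> = mat 1" by (simp add: SSi DDi)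
  finally have BX: "B ** X = mat 1" .
  have "X ** B = Si ** (Di ** ((Si ** S) ** diag_mat d)) ** S"
    by (simp add: B_def X_def matrix_mul_assoc)
  also have "\<dots> = mat 1" by (simp add: SSi DDi)
  finally have XB: "X ** B = mat 1" .
  have Binv: "matrix_inv B = X" by (rule matrix_inv_eq[OF BX XB])
  have "trace (matrix_inv B ** A) = trace ((Si ** Di) ** ((Si ** S) ** S))"
    by (simp add: Binv X_def SS[symmetric] matrix_mul_assoc)
  also have "\<dots> = trace ((Si ** Di) ** S)" by (simp add: SSi)
  also have "\<dots> = trace (S ** (Si ** Di))" by (rule trace_mul_sym)
  also have "\<dots> = trace Di" by (simp add: matrix_mul_assoc SSi)
  also have "\<dots> = (\<Sum>i\<in>UNIV. 1 / d $ i)" by (simp add: Di_def trace_def diag_mat_def)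
  finally have tr: "trace (matrix_inv B ** A) = (\<Sum>i\<in>UNIV. 1 / d $ i)" .
  have lnB: "ln (det B) - ln (det A) = (\<Sum>i\<in>UNIV. ln (d $ i))"
    using dA pd d by (simp add: dB ln_mult ln_prod less_imp_neq[symmetric])
  show ?thesis
    using KL_gauss[OF A dBpos] unfolding B_def[symmetric] tr
    using lnB by (simp add: algebra_simps)
qed

lemma card_rank:
  assumes "m \<le> CARD('n::{finite,linorder})"
  shows "card {i::'n. card {j. j < i} < m} = m"
proof -
  define r where "r i = card {j::'n. j < i}" for i
  have mono: "i < i' \<Longrightarrow> r i < r i'" for i i'
    unfolding r_def by (rule psubset_card_mono) auto
  have inj: "inj r"
    by (rule injI) (metis mono less_irrefl linorder_neqE)
  have rl: "r i < CARD('n)" for i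
    unfolding r_def by (rule psubset_card_mono) auto
  have rng: "range r = {..<CARD('n)}"
  proof (rule card_subset_eq)
    show "range r \<subseteq> {..<CARD('n)}" using rl by auto
    show "card (range r) = card {..<CARD('n)}" using inj by (simp add: card_image)
  qed simp
  have img: "r ` {i. r i < m} = {..<m}"
  proof
    show "r ` {i. r i < m} \<subseteq> {..<m}" by auto
    show "{..<m} \<subseteq> r ` {i. r i < m}"
    proof
      fix k assume "k \<in> {..<m}"
      then have "k \<in> range r" using rng assms by auto
      then obtain i where "k = r i" by auto
      then show "k \<in> r ` {i. r i < m}" using \<open>k \<in> {..<m}\<close> by auto
    qed
  qed
  have "card {i. r i < m} = card (r ` {i. r i < m})"
    using inj by (simp add: card_image inj_on_subset)
  then show ?thesis using img by (simp add: r_def)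
qed

lemma sum_rank_if:
  fixes f :: "real \<Rightarrow> real"
  assumes "m \<le> CARD('n::{finite,linorder})"
  shows "(\<Sum>i\<in>(UNIV::'n set). f (if card {j. j < i} < m then a else b)) = m * f a + (CARD('n) - m) * f b"
proof -
  let ?P = "{i::'n. card {j. j < i} < m}"
  have "(\<Sum>i\<in>(UNIV::'n set). f (if card {j. j < i} < m then a else b))
      = (\<Sum>i\<in>(UNIV::'n set). if card {j. j < i} < m then f a else f b)"
    by (rule sum.cong) auto
  also have "\<dots> = card ?P * f a + card (UNIV - ?P) * f b"
    by (simp add: sum.If_cases Compl_eq_Diff_UNIV)
  also have "card (UNIV - ?P) = CARD('n) - m"
    using card_rank[OF assms] by (simp add: card_Diff_subset)
  finally show ?thesis using card_rank[OF assms] by simp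
qed

lemma ln_strict:
  fixes x :: real
  assumes "0 < x" "x \<noteq> 1"
  shows "ln x < x - 1"
proof -
  define s where "s = sqrt x"
  have s: "s > 0" "s \<noteq> 1" "s * s = x" using assms by (auto simp: s_def)
  have "ln x = 2 * ln s" using assms by (simp add: s_def ln_sqrt)
  also have "\<dots> \<le> 2 * (s - 1)" using ln_le_minus_one[OF s(1)] by simp
  also have "\<dots> < x - 1"
  proof -
    have "(s - 1) * (s - 1) > 0" using s(2) by (metis not_real_square_gt_zero right_minus_eq)
    then show ?thesis using s(3) by (simp add: algebra_simps)
  qed
  finally show ?thesis .
qed

lemma diag_const: "diag_mat (\<chi> i. c) = (c *\<^sub>R mat 1 :: real^'n^'n)"
  by (simp add: vec_eq_iff diag_mat_def mat_def)

theorem propositionD2: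
  fixes \<Sigma> :: "real^('n::{finite,linorder})^('n::{finite,linorder})" and m :: nat and \<sigma> :: real
  assumes "CARD('n) \<ge> 2" and "1 \<le> m" and "m \<le> CARD('n) - 1"
    and "0 < \<sigma>" and "\<sigma> < 1"
    and "sym_posdef \<Sigma>"
  shows "(\<forall>\<alpha> \<beta>. \<alpha> > \<beta> \<and> \<beta> > 0 \<and> \<alpha> ^ m * \<beta> ^ (CARD('n) - m) = \<sigma> ^ CARD('n) \<longrightarrow>
            KL (gaussian \<Sigma>) (gaussian (mat_sqrt \<Sigma> ** D_mat m \<alpha> \<beta> ** mat_sqrt \<Sigma>))
              \<ge> KL (gaussian \<Sigma>) (gaussian (\<sigma> *\<^sub>R \<Sigma>))
          \<and> (KL (gaussian \<Sigma>) (gaussian (mat_sqrt \<Sigma> ** D_mat m \<alpha> \<beta> ** mat_sqrt \<Sigma>))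
              = KL (gaussian \<Sigma>) (gaussian (\<sigma> *\<^sub>R \<Sigma>)) \<longleftrightarrow> \<alpha> = \<sigma> \<and> \<beta> = \<sigma>))
       \<and> filterlim
           (\<lambda>\<beta>. KL (gaussian \<Sigma>)
                   (gaussian (mat_sqrt \<Sigma> **
                      D_mat m (root m (\<sigma> ^ CARD('n) / \<beta> ^ (CARD('n) - m))) \<beta> ** mat_sqrt \<Sigma>))
                 / KL (gaussian \<Sigma>) (gaussian (\<sigma> *\<^sub>R \<Sigma>)))
           at_top (at_right 0)"
proof -
  note n2 = assms(1) and m1 = assms(2) and mn = assms(3) and s0 = assms(4) and s1 = assms(5)
  note Sig = assms(6)
  define S where "S = mat_sqrt \<Sigma>"
  have SS: "S ** S = \<Sigma>" using mat_sqrt[OF Sig] by (simp add: S_def)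
  have mle: "m \<le> CARD('n)" using mn by simp
  define n :: real where "n = real CARD('n)"
  define k :: real where "k = real (CARD('n) - m)"
  have kpos: "k \<ge> 1" using mn n2 by (simp add: k_def)
  have nmk: "n = real m + k" using mle by (simp add: n_def k_def)
  have KLD: "KL (gaussian \<Sigma>) (gaussian (S ** D_mat m a b ** S))
      = (m / a + k / b - n + (m * ln a + k * ln b)) / 2" if ab: "a > 0" "b > 0" for a b
  proof -
    define d :: "real^('n::{finite,linorder})" where "d = (\<chi> i. if card {j. j < i} < m then a else b)"
    have dpos: "d $ i > 0" for i using ab by (simp add: d_def)
    have s1: "(\<Sum>i\<in>UNIV. 1 / d $ i) = m / a + k / b"
      using sum_rank_if[OF mle, of "\<lambda>x. 1 / x" a b] by (simp add: d_def k_def)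
    have s2: "(\<Sum>i\<in>UNIV. ln (d $ i)) = m * ln a + k * ln b"
      using sum_rank_if[OF mle, of ln a b] by (simp add: d_def k_def)
    show ?thesis
      using KL_SDS[OF Sig SS, of d] dpos unfolding D_mat_def d_def[symmetric] s1 s2
      by (simp add: n_def)
  qed
  have K0: "KL (gaussian \<Sigma>) (gaussian (\<sigma> *\<^sub>R \<Sigma>)) = (n / \<sigma> - n + n * ln \<sigma>) / 2"
  proof -
    have eq: "\<sigma> *\<^sub>R \<Sigma> = S ** diag_mat (\<chi> i. \<sigma>) ** S"
      by (simp add: diag_const matrix_scalar_ac scalar_matrix_assoc[symmetric] SS)
    show ?thesis
      using KL_SDS[OF Sig SS, of "\<chi> i. \<sigma>"] s0 unfolding eq[symmetric]
      by (simp add: n_def)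
  qed
  have K0pos: "n / \<sigma> - n + n * ln \<sigma> > 0"
  proof -
    have "ln (1 / \<sigma>) < 1 / \<sigma> - 1" using s0 s1 by (intro ln_strict) auto
    then have "1 / \<sigma> - 1 + ln \<sigma> > 0" using s0 by (simp add: ln_div)
    moreover have "n > 0" using n2 by (simp add: n_def)
    ultimately have "n * (1 / \<sigma> - 1 + ln \<sigma>) > 0" by simp
    then show ?thesis by (simp add: algebra_simps)
  qed
  have part1: "KL (gaussian \<Sigma>) (gaussian (S ** D_mat m \<alpha> \<beta> ** S))
              \<ge> KL (gaussian \<Sigma>) (gaussian (\<sigma> *\<^sub>R \<Sigma>))
          \<and> (KL (gaussian \<Sigma>) (gaussian (S ** D_mat m \<alpha> \<beta> ** S))
              = KL (gaussian \<Sigma>) (gaussian (\<sigma> *\<^sub>R \<Sigma>)) \<longleftrightarrow> \<alpha> = \<sigma> \<and> \<beta> = \<sigma>)"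
    if ab: "\<alpha> > \<beta>" "\<beta> > 0" "\<alpha> ^ m * \<beta> ^ (CARD('n) - m) = \<sigma> ^ CARD('n)" for \<alpha> \<beta>
  proof -
    have a0: "\<alpha> > 0" using ab by simp
    have lnrel: "m * ln \<alpha> + k * ln \<beta> = n * ln \<sigma>"
    proof -
      have "ln (\<alpha> ^ m * \<beta> ^ (CARD('n) - m)) = ln (\<sigma> ^ CARD('n))" using ab(3) by simp
      then show ?thesis using a0 ab(2) s0 by (simp add: ln_mult ln_realpow k_def n_def)
    qed
    define u where "u = \<sigma> / \<alpha>"
    define v where "v = \<sigma> / \<beta>"
    have u0: "u > 0" and v0: "v > 0" using a0 ab s0 by (simp_all add: u_def v_def)
    have uv: "u \<noteq> v" using ab s0 by (auto simp: u_def v_def field_simps)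
    have lu: "ln u \<le> u - 1" using ln_le_minus_one[OF u0] .
    have lv: "ln v \<le> v - 1" using ln_le_minus_one[OF v0] .
    have strict: "ln u < u - 1 \<or> ln v < v - 1"
      using uv ln_strict[OF u0] ln_strict[OF v0] by auto
    have lsum: "m * ln u + k * ln v = 0"
      using lnrel a0 ab(2) s0 nmk by (simp add: u_def v_def ln_div algebra_simps)
    have "m * (u - 1 - ln u) + k * (v - 1 - ln v) > 0"
    proof -
      have "m * (u - 1 - ln u) \<ge> 0" using lu by simp
      moreover have "k * (v - 1 - ln v) \<ge> 0" using lv kpos by simp
      moreover have "m * (u - 1 - ln u) > 0 \<or> k * (v - 1 - ln v) > 0"
        using strict m1 kpos by auto
      ultimately show ?thesis by linarith
    qed
    then have "m * u + k * v > n" using lsum nmk by (simp add: algebra_simps)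
    then have "(m * u + k * v) / \<sigma> > n / \<sigma>" using s0 by (simp add: divide_strict_right_mono)
    then have ineq: "m / \<alpha> + k / \<beta> > n / \<sigma>" using s0 a0 ab(2)
      by (simp add: u_def v_def add_divide_distrib)
    have "KL (gaussian \<Sigma>) (gaussian (S ** D_mat m \<alpha> \<beta> ** S)) > KL (gaussian \<Sigma>) (gaussian (\<sigma> *\<^sub>R \<Sigma>))"
      unfolding KLD[OF a0 ab(2)] K0 lnrel by (rule divide_strict_right_mono) (use ineq in simp_all)
    then show ?thesis using ab(1) by auto
  qed
  have part2: "filterlim (\<lambda>\<beta>. KL (gaussian \<Sigma>) (gaussian (S ** D_mat m (root m (\<sigma> ^ CARD('n) / \<beta> ^ (CARD('n) - m))) \<beta> ** S))
                 / KL (gaussian \<Sigma>) (gaussian (\<sigma> *\<^sub>R \<Sigma>))) at_top (at_right 0)"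
  proof -
    define K where "K = (n / \<sigma> - n + n * ln \<sigma>) / 2"
    have Kpos: "K > 0" using K0pos by (simp add: K_def)
    define C where "C = (- n + n * ln \<sigma>) / 2"
    have lim: "filterlim (\<lambda>b. (k / (2 * K)) * inverse b + C / K) at_top (at_right 0)"
    proof -
      have "filterlim (\<lambda>b. (k / (2 * K)) * inverse b) at_top (at_right (0::real))"
        by (rule filterlim_tendsto_pos_mult_at_top[OF tendsto_const _ filterlim_inverse_at_top_right])
          (use Kpos kpos in simp)
      then show ?thesis
        by (subst add.commute, intro filterlim_tendsto_add_at_top[OF tendsto_const])
    qed
    show ?thesis
    proof (rule filterlim_at_top_mono[OF lim])
      show "\<forall>\<^sub>F b in at_right 0. k / (2 * K) * inverse b + C / K \<le>
          KL (gaussian \<Sigma>) (gaussian (S ** D_mat m (root m (\<sigma> ^ CARD('n) / b ^ (CARD('n) - m))) b ** S))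
                 / KL (gaussian \<Sigma>) (gaussian (\<sigma> *\<^sub>R \<Sigma>))"
        using eventually_at_right_less[of 0]
      proof eventually_elim
        case (elim b)
        define a where "a = root m (\<sigma> ^ CARD('n) / b ^ (CARD('n) - m))"
        have a0: "a > 0" using elim s0 m1 by (simp add: a_def)
        have apow: "a ^ m * b ^ (CARD('n) - m) = \<sigma> ^ CARD('n)"
          using elim s0 m1 by (simp add: a_def real_root_pow_pos)
        have lnrel: "m * ln a + k * ln b = n * ln \<sigma>"
        proof -
          have "ln (a ^ m * b ^ (CARD('n) - m)) = ln (\<sigma> ^ CARD('n))" using apow by simp
          then show ?thesis using a0 elim s0 by (simp add: ln_mult ln_realpow k_def n_def)
        qed
        have "KL (gaussian \<Sigma>) (gaussian (S ** D_mat m a b ** S)) = (m / a + k / b - n + n * ln \<sigma>) / 2"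
          using KLD[OF a0 elim] lnrel by simp
        moreover have "m / a \<ge> 0" using a0 by simp
        ultimately have "KL (gaussian \<Sigma>) (gaussian (S ** D_mat m a b ** S)) \<ge> k / b / 2 + C"
          by (simp add: C_def field_simps)
        then have "KL (gaussian \<Sigma>) (gaussian (S ** D_mat m a b ** S)) / K \<ge> (k / b / 2 + C) / K"
          using Kpos by (simp add: divide_right_mono)
        moreover have "(k / b / 2 + C) / K = k / (2 * K) * inverse b + C / K"
          using Kpos elim by (simp add: field_simps)
        ultimately show ?case
          unfolding a_def[symmetric] K0 K_def[symmetric] by simp
      qed
    qed
  qed
  show ?thesis using part1 part2 unfolding S_def by blast
qed

end
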